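(* Let $R_*\in(0,\pi)$ be the unique solution in $(0,\pi)$ of $R=(\sin R)(2-\cos R)$, and let $R\in[R_*,\pi]$. Then, with $\widehat W_R(\ell)=\frac{2}{\pi\ell^3}(\ell R-\sin(\ell R))$, $$\widehat W_R(\ell)\le\frac{\widehat W_R(1)}{\ell}\qquad\text{for all integers }\ell\ge1,$$ and the inequality is strict for every $\ell\ge3$.
   Context: $\widehat W_R(\ell)$ is the $\ell$-th Fourier coefficient $\int_{\mathbb T}W_R(\theta)e^{-2\pi i\ell\theta}d\theta$ of the Hegselmann--Krause interaction $W_R(\theta)=(R-2\pi|\theta|)_+^2$ on $\mathbb T=[-\frac12,\frac12)$, for $R\in[0,\pi]$. *)

theory Defs
  imports Complex_Main
begin

text \<open>Closed form of the l-th Fourier coefficient of the Hegselmann--Krause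
interaction W_R(theta) = (R - 2 pi |theta|)_+^2 on the torus, as given in the statement.\<close>
definition W_hat :: "real \<Rightarrow> real \<Rightarrow> real" where
  "W_hat R l = 2 / (pi * l ^ 3) * (l * R - sin (l * R))"

end

theory Submission
  imports Defs "HOL-Analysis.Analysis"
begin

definition fR :: "real \<Rightarrow> real" where
  "fR x = x - sin x * (2 - cos x)"

lemma fR_deriv: "DERIV fR x :> 2 * cos x * (cos x - 1)"
proof -
  have "DERIV fR x :> 1 - (cos x * (2 - cos x) + sin x * (0 - - sin x))"
    unfolding fR_def by (auto intro!: derivative_eq_intros)
  moreover have "1 - (cos x * (2 - cos x) + sin x * (0 - - sin x)) = 2 * cos x * (cos x - 1)"
    using sin_cos_squared_add[of x] by (simp add: algebra_simps power2_eq_square)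
  ultimately show ?thesis by simp
qed

lemma fR_neg: assumes "0 < x" "x \<le> pi/2" shows "fR x < 0"
proof -
  have "fR x < fR 0"
  proof (rule DERIV_neg_imp_decreasing_open[OF assms(1)])
    fix y assume y: "0 < y" "y < x"
    have c1: "0 < cos y" using cos_gt_zero[of y] y assms by simp
    have c2: "cos y < 1" using cos_monotone_0_pi[of 0 y] y assms pi_gt_zero by simp
    have "2 * cos y * (cos y - 1) < 0" using c1 c2 by (simp add: mult_pos_neg)
    then show "\<exists>d. DERIV fR y :> d \<and> d < 0" using fR_deriv by blast
  next
    show "continuous_on {0..x} fR" unfolding fR_def by (intro continuous_intros)
  qed
  then show ?thesis by (simp add: fR_def)
qed

lemma fR_mono: assumes "pi/2 \<le> x" "x \<le> y" "y \<le> pi" shows "fR x \<le> fR y"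
proof (rule DERIV_nonneg_imp_nondecreasing[OF assms(2)])
  fix z assume z: "x \<le> z" "z \<le> y"
  have c1: "cos z \<le> 0" using z assms cos_monotone_0_pi_le[of "pi/2" z] by simp
  have "0 \<le> 2 * cos z * (cos z - 1)" using c1 cos_le_one[of z]
    by (simp add: mult_nonpos_nonpos)
  then show "\<exists>d. DERIV fR z :> d \<and> 0 \<le> d" using fR_deriv by blast
qed

lemma fR_120: "fR (2*pi/3) < 0"
proof -
  have s: "1.7 < sqrt 3" by (rule real_less_rsqrt) (simp add: power2_eq_square)
  show ?thesis unfolding fR_def cos_120 sin_120 using s pi_approx by simp
qed

lemma Rs_big:
  assumes "0 < Rs" "Rs < pi" "fR Rs = 0"
  shows "2*pi/3 < Rs"
proof (rule ccontr)
  assume "\<not> 2*pi/3 < Rs"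
  then have h: "Rs \<le> 2*pi/3" by simp
  show False
  proof (cases "Rs \<le> pi/2")
    case True then show ?thesis using fR_neg[of Rs] assms by simp
  next
    case False
    then have "fR Rs \<le> fR (2*pi/3)" using fR_mono[of Rs "2*pi/3"] h pi_gt_zero by simp
    then show ?thesis using fR_120 assms by simp
  qed
qed

lemma key:
  fixes R l :: real
  assumes "2 \<le> R" "R \<le> pi" "3 \<le> l"
  shows "l * R - sin (l * R) < l^2 * (R - sin R)"
proof -
  have s1: "sin R \<le> 1" by simp
  have s2: "- 1 \<le> sin (l*R)" by simp
  define a where "a = R - sin R"
  have a0: "0 \<le> a" using s1 assms unfolding a_def by linarith
  have "3 * a - R \<le> l * a - R" using a0 assms by (simp add: mult_right_mono)
  moreover have "0 \<le> 3 * a - R" using s1 assms unfolding a_def by argo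
  ultimately have "3 * (3 * a - R) \<le> l * (l * a - R)" using assms
    by (intro mult_mono) auto
  moreover have "3 * (3*a - R) \<ge> 3" using s1 assms unfolding a_def by argo
  ultimately have "l^2 * a - l * R \<ge> 3" by (simp add: power2_eq_square algebra_simps)
  then show ?thesis using s2 unfolding a_def by linarith
qed

theorem lemma3p4:
  fixes Rs R :: real
  assumes "0 < Rs" and "Rs < pi" and "Rs = sin Rs * (2 - cos Rs)"
    and "Rs \<le> R" and "R \<le> pi"
  shows "(\<forall>l::nat. l \<ge> 1 \<longrightarrow> W_hat R (real l) \<le> W_hat R 1 / real l)
       \<and> (\<forall>l::nat. l \<ge> 3 \<longrightarrow> W_hat R (real l) < W_hat R 1 / real l)"
proof -
  have f0: "fR Rs = 0" using assms(3) unfolding fR_def by simp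
  have big: "2*pi/3 < Rs" using Rs_big[OF assms(1,2) f0] .
  have R2: "2 \<le> R" using big assms(4) pi_gt3 by simp
  have fRR: "0 \<le> fR R" using fR_mono[of Rs R] f0 big assms by simp
  have red: "W_hat R l \<le> W_hat R 1 / l \<longleftrightarrow> l * R - sin (l * R) \<le> l^2 * (R - sin R)"
    and red2: "W_hat R l < W_hat R 1 / l \<longleftrightarrow> l * R - sin (l * R) < l^2 * (R - sin R)"
    if "1 \<le> l" for l :: real
  proof -
    have e: "W_hat R 1 / l = 2 / (pi * l^3) * (l^2 * (R - sin R))"
      unfolding W_hat_def using that by (simp add: field_simps power2_eq_square power3_eq_cube)
    have p: "0 < 2 / (pi * l^3)" using that by simp
    show "W_hat R l \<le> W_hat R 1 / l \<longleftrightarrow> l * R - sin (l * R) \<le> l^2 * (R - sin R)"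
      unfolding e unfolding W_hat_def using p by (simp only: mult_le_cancel_left_pos)
    show "W_hat R l < W_hat R 1 / l \<longleftrightarrow> l * R - sin (l * R) < l^2 * (R - sin R)"
      unfolding e unfolding W_hat_def using p by (simp only: mult_less_cancel_left_pos)
  qed
  have strict: "W_hat R (real l) < W_hat R 1 / real l" if "3 \<le> l" for l :: nat
    using red2[of "real l"] key[OF R2 assms(5), of "real l"] that by simp
  have weak: "W_hat R (real l) \<le> W_hat R 1 / real l" if "1 \<le> l" for l :: nat
  proof -
    have "l = 1 \<or> l = 2 \<or> 3 \<le> l" using that by arith
    then consider "l = 1" | "l = 2" | "3 \<le> l" by blast
    then show ?thesis
    proof cases
      case 1 then show ?thesis by simp
    next
      case 2
      have "2 * R - sin (2 * R) \<le> 2^2 * (R - sin R)"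
        using fRR unfolding fR_def sin_double by (simp add: algebra_simps)
      then show ?thesis using red[of 2] 2 by simp
    next
      case 3 then show ?thesis using strict by (simp add: less_imp_le)
    qed
  qed
  show ?thesis using weak strict by blast
qed

end
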